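(* Consider the model and approximate SIR in the context with perfect coordination $p=0$ (so $\Omega=0$ almost surely) and $q\in(0,1]$. Then $$\mathbb{P}\left(\widetilde{\mathsf{SIR}}_L\ge\frac{\beta}{\gamma}\right)=1-\sum_{\ell=0}^{L-1}e^{-\frac{\alpha-2}{2q\beta/\gamma}}\frac{\left(\frac{\alpha-2}{2q\beta/\gamma}\right)^\ell}{\ell!}.$$
   Context: Let $\Phi$ be a homogeneous Poisson point process on $\mathbb{R}^2$ of intensity $\lambda>0$ (base station locations), user at the origin $o$; label the points in increasing distance as $x_1,x_2,\dots$ and set $R_L=\|x_L\|$ for a fixed integer $L\ge1$. Fix $\alpha>2$, $\gamma>0$, $\beta>0$, $q\in(0,1]$. With all other participating BSs silent, the approximate (interference-limited) SIR of the $L$-th BS, in which the interference from BSs beyond $x_L$ (each active with probability $q$) is replaced by its conditional mean given $R_L$, is $\widetilde{\mathsf{SIR}}_L=\frac{R_L^{-\alpha}}{\frac{2\pi q\lambda}{\alpha-2}R_L^{2-\alpha}}$. *)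

theory Defs
  imports "HOL-Probability.Probability"
begin

text \<open>The plane R^2 is modelled by the type complex (2-dimensional Euclidean space),
  with Lebesgue measure lborel.\<close>

definition count_in :: "('w \<Rightarrow> complex set) \<Rightarrow> complex set \<Rightarrow> 'w \<Rightarrow> nat" where
  "count_in Phi A w = card (Phi w \<inter> A)"

definition is_PPP :: "'w measure \<Rightarrow> ('w \<Rightarrow> complex set) \<Rightarrow> real \<Rightarrow> bool" where
  "is_PPP M Phi lam \<longleftrightarrow>
     prob_space M \<and>
     (\<forall>A. A \<in> sets borel \<and> bounded A \<longrightarrow>
        (\<forall>w\<in>space M. finite (Phi w \<inter> A)) \<and>
        count_in Phi A \<in> measurable M (count_space UNIV) \<and>
        (\<forall>k::nat. measure M {w \<in> space M. count_in Phi A w = k}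
            = (lam * measure lborel A) ^ k / fact k * exp (- (lam * measure lborel A)))) \<and>
     (\<forall>(I::nat set) As. finite I \<and> disjoint_family_on As I \<and>
        (\<forall>i\<in>I. As i \<in> sets borel \<and> bounded (As i)) \<longrightarrow>
        prob_space.indep_vars M (\<lambda>_. count_space UNIV) (\<lambda>i. count_in Phi (As i)) I)"

definition R_L :: "('w \<Rightarrow> complex set) \<Rightarrow> nat \<Rightarrow> 'w \<Rightarrow> real" where
  "R_L Phi L w = Inf {r. 0 \<le> r \<and> L \<le> card (Phi w \<inter> cball 0 r)}"

text \<open>Approximate (interference-limited) SIR of the L-th BS, given R = R_L.\<close>

definition SIR_approx :: "real \<Rightarrow> real \<Rightarrow> real \<Rightarrow> real \<Rightarrow> real" where
  "SIR_approx lam q alpha R =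
     R powr (- alpha) / (2 * pi * q * lam / (alpha - 2) * R powr (2 - alpha))"

end

theory Submission
  imports Defs "HOL-Real_Asymp.Real_Asymp"
begin

lemma right_cont:
  fixes P :: "complex set" and a :: real
  assumes fin: "finite (P \<inter> cball 0 (a+1))"
  shows "\<exists>r'>a. P \<inter> cball 0 r' = P \<inter> cball 0 a"
proof -
  define T where "T = norm ` (P \<inter> cball 0 (a+1)) \<inter> {a<..}"
  have fT: "finite T" using fin by (simp add: T_def)
  define r' where "r' = (if T = {} then a+1 else (a + Min T)/2)"
  have Tgt: "\<And>t. t \<in> T \<Longrightarrow> a < t" by (auto simp: T_def)
  have Tle: "\<And>t. t \<in> T \<Longrightarrow> t \<le> a+1" by (auto simp: T_def)
  have r'a: "a < r'"
  proof (cases "T = {}")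
    case False
    then have "Min T \<in> T" using fT by simp
    then show ?thesis using Tgt False by (simp add: r'_def)
  qed (simp add: r'_def)
  have r'le: "r' \<le> a+1"
  proof (cases "T = {}")
    case False
    then have "Min T \<in> T" using fT by simp
    then show ?thesis using Tle[of "Min T"] False by (simp add: r'_def)
  qed (simp add: r'_def)
  have "P \<inter> cball 0 r' \<subseteq> P \<inter> cball 0 a"
  proof
    fix x assume x: "x \<in> P \<inter> cball 0 r'"
    show "x \<in> P \<inter> cball 0 a"
    proof (rule ccontr)
      assume "x \<notin> P \<inter> cball 0 a"
      then have "norm x > a" using x by auto
      moreover have "norm x \<le> a+1" using x r'le by auto
      ultimately have "norm x \<in> T" using x by (auto simp: T_def)
      then have ne: "T \<noteq> {}" and "Min T \<le> norm x" using fT by auto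
      moreover have "norm x \<le> r'" using x by auto
      moreover have "a < Min T" using ne fT Tgt by simp
      ultimately show False by (simp add: r'_def)
    qed
  qed
  moreover have "P \<inter> cball 0 a \<subseteq> P \<inter> cball 0 r'" using r'a by auto
  ultimately show ?thesis using r'a by blast
qed

lemma inf_le_iff:
  fixes P :: "complex set" and a :: real
  assumes fin: "\<And>r. finite (P \<inter> cball 0 r)"
    and ne: "{r. 0 \<le> r \<and> L \<le> card (P \<inter> cball 0 r)} \<noteq> {}" and a: "0 \<le> a"
  shows "Inf {r. 0 \<le> r \<and> L \<le> card (P \<inter> cball 0 r)} \<le> a \<longleftrightarrow> L \<le> card (P \<inter> cball 0 a)"
proof
  let ?S = "{r. 0 \<le> r \<and> L \<le> card (P \<inter> cball 0 r)}"
  have bdd: "bdd_below ?S" by (auto intro: bdd_belowI[of _ 0])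
  assume "Inf ?S \<le> a"
  obtain r' where r': "r' > a" "P \<inter> cball 0 r' = P \<inter> cball 0 a"
    using right_cont[OF fin] by blast
  have "Inf ?S < r'" using r' \<open>Inf ?S \<le> a\<close> by linarith
  then obtain s where s: "s \<in> ?S" "s < r'" using cInf_less_iff[OF ne bdd] by blast
  have "card (P \<inter> cball 0 s) \<le> card (P \<inter> cball 0 r')"
    using s(2) by (intro card_mono[OF fin]) auto
  then show "L \<le> card (P \<inter> cball 0 a)" using s(1) r'(2) by simp
next
  let ?S = "{r. 0 \<le> r \<and> L \<le> card (P \<inter> cball 0 r)}"
  have bdd: "bdd_below ?S" by (auto intro: bdd_belowI[of _ 0])
  assume "L \<le> card (P \<inter> cball 0 a)"
  then have "a \<in> ?S" using a by simp
  then show "Inf ?S \<le> a" using bdd by (rule cInf_lower)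
qed

lemma inf_nonneg:
  fixes P :: "complex set"
  assumes ne: "{r. 0 \<le> r \<and> L \<le> card (P \<inter> cball 0 r)} \<noteq> {}"
  shows "0 \<le> Inf {r. 0 \<le> r \<and> L \<le> card (P \<inter> cball 0 r)}"
  using ne by (intro cInf_greatest) auto

lemma sir_iff:
  fixes lam q alpha beta gamma R :: real
  assumes "lam > 0" "alpha > 2" "gamma > 0" "beta > 0" "q > 0" "R \<ge> 0"
  shows "SIR_approx lam q alpha R \<ge> beta / gamma \<longleftrightarrow>
     0 < R \<and> R \<le> sqrt (gamma / (2 * pi * q * lam / (alpha - 2) * beta))"
proof (cases "R = 0")
  case True
  have "0 < beta / gamma" using assms by simp
  moreover have "SIR_approx lam q alpha R = 0" using True by (simp add: SIR_approx_def)
  ultimately show ?thesis using True by linarith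
next
  case False
  define c where "c = 2 * pi * q * lam / (alpha - 2)"
  have c: "c > 0" using assms by (simp add: c_def)
  have R: "R > 0" using False assms by simp
  have "R powr (2 - alpha) = R powr (2 + -alpha)" by simp
  also have "\<dots> = R powr 2 * R powr (-alpha)" by (rule powr_add)
  also have "R powr 2 = R^2" using R by (simp add: powr_numeral)
  finally have pw: "R powr (2 - alpha) = R^2 * R powr (-alpha)" .
  have "SIR_approx lam q alpha R = R powr (-alpha) / (c * (R^2 * R powr (-alpha)))"
    unfolding SIR_approx_def c_def pw by simp
  also have "\<dots> = 1 / (c * R^2)" using R by simp
  finally have "SIR_approx lam q alpha R \<ge> beta / gamma \<longleftrightarrow> beta / gamma \<le> 1 / (c * R^2)" by simp
  also have "\<dots> \<longleftrightarrow> R^2 \<le> gamma / (c * beta)"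
    using R c assms by (simp add: divide_le_eq le_divide_eq algebra_simps)
  also have "\<dots> \<longleftrightarrow> R \<le> sqrt (gamma / (c * beta))"
    using R by (metis real_sqrt_abs real_sqrt_le_iff abs_of_nonneg less_imp_le)
  finally show ?thesis using R by (simp add: c_def)
qed

lemma lim0:
  fixes lam :: real and L :: nat assumes "lam > 0"
  shows "(\<lambda>n::nat. \<Sum>k<L. (lam * pi * real n ^ 2) ^ k / fact k * exp (- (lam * pi * real n ^ 2))) \<longlonglongrightarrow> 0"
proof -
  have f: "filterlim (\<lambda>n::nat. lam * pi * real n ^ 2) at_top sequentially"
    using assms by real_asymp
  have kf: "\<And>k. (\<lambda>n::nat. (lam * pi * real n ^ 2) ^ k / fact k * exp (- (lam * pi * real n ^ 2))) \<longlonglongrightarrow> 0"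
  proof -
    fix k :: nat
    have "(\<lambda>n::nat. (lam * pi * real n ^ 2) ^ k / exp (lam * pi * real n ^ 2)) \<longlonglongrightarrow> 0"
      by (rule filterlim_compose[OF tendsto_power_div_exp_0 f])
    then have "(\<lambda>n::nat. (lam * pi * real n ^ 2) ^ k / exp (lam * pi * real n ^ 2) / fact k) \<longlonglongrightarrow> 0 / fact k"
      by (intro tendsto_divide) auto
    then show "(\<lambda>n::nat. (lam * pi * real n ^ 2) ^ k / fact k * exp (- (lam * pi * real n ^ 2))) \<longlonglongrightarrow> 0"
      by (simp add: exp_minus field_simps)
  qed
  show ?thesis by (rule tendsto_null_sum) (rule kf)
qed


lemma pred_meas:
  assumes "f \<in> measurable M (count_space UNIV)"
  shows "{w\<in>space M. Q (f w)} \<in> sets M"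
proof -
  have "f -` {k. Q k} \<inter> space M \<in> sets M" by (rule measurable_sets[OF assms]) simp
  also have "f -` {k. Q k} \<inter> space M = {w\<in>space M. Q (f w)}" by auto
  finally show ?thesis .
qed

lemma vol_cball: "r \<ge> 0 \<Longrightarrow> measure lborel (cball (0::complex) r) = pi * r^2"
  using content_cball[of r "0::complex"] by (simp add: unit_ball_vol_2)

theorem proposition1:
  fixes M :: "'w measure" and Phi :: "'w \<Rightarrow> complex set"
    and lam alpha gamma beta q :: real and L :: nat
  assumes "is_PPP M Phi lam" and "lam > 0" and "alpha > 2" and "gamma > 0" and "beta > 0"
    and "0 < q" and "q \<le> 1" and "L \<ge> 1"
  shows "measure M {w \<in> space M. SIR_approx lam q alpha (R_L Phi L w) \<ge> beta / gamma}
    = 1 - (\<Sum>l<L. exp (- ((alpha - 2) / (2 * q * beta / gamma)))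
              * ((alpha - 2) / (2 * q * beta / gamma)) ^ l / fact l)"
proof -
  interpret prob_space M using assms(1) by (simp add: is_PPP_def)
  have cnt: "\<And>A. A \<in> sets borel \<Longrightarrow> bounded A \<Longrightarrow>
        (\<forall>w\<in>space M. finite (Phi w \<inter> A)) \<and>
        count_in Phi A \<in> measurable M (count_space UNIV) \<and>
        (\<forall>k::nat. measure M {w \<in> space M. count_in Phi A w = k}
            = (lam * measure lborel A) ^ k / fact k * exp (- (lam * measure lborel A)))"
    using assms(1) unfolding is_PPP_def by blast
  have cb: "cball (0::complex) r \<in> sets borel" "bounded (cball (0::complex) r)" for r
    by (auto intro: borel_closed)
  note cntb = cnt[OF cb]
  have fin: "\<And>w r. w \<in> space M \<Longrightarrow> finite (Phi w \<inter> cball 0 r)" using cntb by blast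
  have meas: "{w\<in>space M. Q (count_in Phi (cball 0 r) w)} \<in> sets M" for r Q
    using cntb by (blast intro: pred_meas)
  have pois: "\<And>r k. r \<ge> 0 \<Longrightarrow> measure M {w\<in>space M. count_in Phi (cball 0 r) w = k}
      = (lam * pi * r^2) ^ k / fact k * exp (- (lam * pi * r^2))"
    using cntb vol_cball by (simp add: mult.assoc)
  have poislt: "measure M {w\<in>space M. count_in Phi (cball 0 r) w < L}
      = (\<Sum>k<L. (lam * pi * r^2) ^ k / fact k * exp (- (lam * pi * r^2)))" if r: "r \<ge> 0" for r
  proof -
    have eqm: "{w\<in>space M. count_in Phi (cball 0 r) w = k} \<in> sets M" for k by (rule meas)
    have "{w\<in>space M. count_in Phi (cball 0 r) w < L}
        = (\<Union>k\<in>{..<L}. {w\<in>space M. count_in Phi (cball 0 r) w = k})" by auto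
    also have "measure M \<dots> = (\<Sum>k<L. measure M {w\<in>space M. count_in Phi (cball 0 r) w = k})"
      using eqm by (intro measure_finite_Union) (auto simp: disjoint_family_on_def)
    finally show ?thesis using pois[OF r] by simp
  qed
  define S where "S w = {r. 0 \<le> r \<and> L \<le> card (Phi w \<inter> cball 0 r)}" for w
  have RL: "R_L Phi L w = Inf (S w)" for w by (simp add: R_L_def S_def)
  define Emp where "Emp = {w\<in>space M. \<forall>n::nat. count_in Phi (cball 0 (real n)) w < L}"
  have Emp_sets: "Emp \<in> sets M" unfolding Emp_def
    by (rule sets.sets_Collect_countable_All) (rule meas)
  have Emp_le: "measure M Emp \<le> (\<Sum>k<L. (lam * pi * real n ^ 2) ^ k / fact k * exp (- (lam * pi * real n ^ 2)))" for n
  proof -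
    have "measure M Emp \<le> measure M {w\<in>space M. count_in Phi (cball 0 (real n)) w < L}"
      by (intro finite_measure_mono meas) (auto simp: Emp_def)
    then show ?thesis using poislt[of "real n"] by simp
  qed
  have "measure M Emp \<le> 0"
    using LIMSEQ_le_const[OF lim0[OF assms(2), of L]] Emp_le by blast
  then have "measure M Emp = 0" by (simp add: measure_nonneg antisym)
  then have Emp_null: "Emp \<in> null_sets M" using Emp_sets by (simp add: emeasure_eq_measure null_setsI)
  have S_ne: "S w \<noteq> {}" if ww: "w \<in> space M" "w \<notin> Emp" for w
  proof -
    obtain n :: nat where "\<not> count_in Phi (cball 0 (real n)) w < L" using ww unfolding Emp_def by blast
    then have "real n \<in> S w" by (simp add: S_def count_in_def)
    then show ?thesis by blast
  qed
  have S_e: "S w = {}" if "w \<in> Emp" for w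
  proof (rule ccontr)
    assume "S w \<noteq> {}"
    then obtain r where r: "0 \<le> r" "L \<le> card (Phi w \<inter> cball 0 r)" by (auto simp: S_def)
    obtain n :: nat where n: "r \<le> real n" using real_arch_simple by blast
    have w: "w \<in> space M" using that by (simp add: Emp_def)
    have "card (Phi w \<inter> cball 0 r) \<le> card (Phi w \<inter> cball 0 (real n))"
      using n by (intro card_mono fin[OF w]) auto
    moreover have "card (Phi w \<inter> cball 0 (real n)) < L" using that by (simp add: Emp_def count_in_def)
    ultimately show False using r by linarith
  qed
  define c where "c = 2 * pi * q * lam / (alpha - 2)"
  define r0 where "r0 = sqrt (gamma / (c * beta))"
  have c: "c > 0" using assms by (simp add: c_def)
  have r0: "r0 \<ge> 0" using c assms by (simp add: r0_def)
  define E where "E = {w \<in> space M. SIR_approx lam q alpha (R_L Phi L w) \<ge> beta / gamma}"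
  define A where "A = {w\<in>space M. L \<le> count_in Phi (cball 0 r0) w}"
  define B where "B = {w\<in>space M. count_in Phi (cball 0 0) w < L}"
  define P0 where "P0 = (SIR_approx lam q alpha (Inf {}) \<ge> beta / gamma)"
  have A_sets: "A \<in> sets M" unfolding A_def by (rule meas)
  have B_sets: "B \<in> sets M" unfolding B_def by (rule meas)
  have claim1: "E - Emp = (A \<inter> B) - Emp"
  proof (intro set_eqI iffI)
    fix w assume "w \<in> E - Emp"
    then have w: "w \<in> space M" "w \<notin> Emp" and e: "SIR_approx lam q alpha (Inf (S w)) \<ge> beta / gamma"
      by (auto simp: E_def RL)
    have nn: "0 \<le> Inf (S w)" using inf_nonneg S_ne[OF w] by (simp add: S_def)
    have "0 < Inf (S w) \<and> Inf (S w) \<le> r0" using sir_iff[OF assms(2-6) nn] e by (simp add: r0_def c_def)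
    moreover note i1 = inf_le_iff[OF fin[OF w(1)] S_ne[OF w, unfolded S_def] r0]
    moreover note i2 = inf_le_iff[OF fin[OF w(1)] S_ne[OF w, unfolded S_def], of 0]
    ultimately show "w \<in> (A \<inter> B) - Emp" using w by (auto simp: A_def B_def count_in_def S_def)
  next
    fix w assume "w \<in> (A \<inter> B) - Emp"
    then have w: "w \<in> space M" "w \<notin> Emp" by (auto simp: A_def)
    have nn: "0 \<le> Inf (S w)" using inf_nonneg S_ne[OF w] by (simp add: S_def)
    note i1 = inf_le_iff[OF fin[OF w(1)] S_ne[OF w, unfolded S_def] r0]
    note i2 = inf_le_iff[OF fin[OF w(1)] S_ne[OF w, unfolded S_def], of 0]
    have "0 < Inf (S w) \<and> Inf (S w) \<le> r0"
      using i1 i2 \<open>w \<in> (A \<inter> B) - Emp\<close> nn by (auto simp: A_def B_def count_in_def S_def)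
    then have "SIR_approx lam q alpha (Inf (S w)) \<ge> beta / gamma"
      using sir_iff[OF assms(2-6) nn] by (simp add: r0_def c_def)
    then show "w \<in> E - Emp" using w by (simp add: E_def RL)
  qed
  have claim2: "E \<inter> Emp = (if P0 then Emp else {})"
    using S_e by (auto simp: E_def RL P0_def Emp_def)
  have Eeq: "E = ((A \<inter> B) - Emp) \<union> (if P0 then Emp else {})"
    using claim1 claim2 by blast
  have mE: "measure M E = measure M ((A \<inter> B) - Emp)"
  proof (cases P0)
    case True
    then show ?thesis using Eeq measure_Un_null_set[OF _ Emp_null, of "(A \<inter> B) - Emp"] A_sets B_sets Emp_sets
      by auto
  next
    case False
    then show ?thesis using Eeq by simp
  qed
  also have "\<dots> = measure M (A \<inter> B)"
    using measure_Diff_null_set[OF _ Emp_null] A_sets B_sets by blast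
  also have "\<dots> = measure M A"
  proof -
    define Z where "Z = {w\<in>space M. count_in Phi (cball 0 0) w \<noteq> 0}"
    have Zs: "Z \<in> sets M" unfolding Z_def by (rule meas)
    have "space M - Z = {w\<in>space M. count_in Phi (cball 0 0) w = 0}" by (auto simp: Z_def)
    then have "prob (space M - Z) = 1" using pois[of 0 0] by simp
    then have "prob Z = 0" using prob_compl[OF Zs] by simp
    then have Zn: "Z \<in> null_sets M" using Zs by (simp add: emeasure_eq_measure null_setsI)
    have "space M - B \<subseteq> Z" using assms(8) by (auto simp: B_def Z_def)
    then have nB: "space M - B \<in> null_sets M" using B_sets by (blast intro: null_sets_subset[OF Zn])
    have "A \<inter> B = A - (space M - B)" using A_sets sets.sets_into_space by blast
    then show ?thesis using measure_Diff_null_set[OF A_sets nB] by simp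
  qed
  also have "\<dots> = 1 - prob (space M - A)" using prob_compl[OF A_sets] by simp
  also have "space M - A = {w\<in>space M. count_in Phi (cball 0 r0) w < L}" by (auto simp: A_def)
  also have "prob \<dots> = (\<Sum>k<L. (lam * pi * r0^2) ^ k / fact k * exp (- (lam * pi * r0^2)))"
    by (rule poislt[OF r0])
  also have "lam * pi * r0^2 = (alpha - 2) / (2 * q * beta / gamma)"
  proof -
    have "r0^2 = gamma / (c * beta)" using c assms by (simp add: r0_def)
    then show ?thesis using assms c by (simp add: c_def field_simps)
  qed
  finally show ?thesis unfolding E_def by (simp add: mult.commute mult.left_commute)
qed

end
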